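(* Let $H\subseteq F^7$ be the binary Hamming code of length 7 spanned by the vectors with supports $\{1,2,3\},\{1,4,5\},\{1,6,7\},\{2,4,6\}$. Let $\lambda_1:H\to\{0,1\}$ take the value $0$ exactly on $0^7$, $\{1,6,7\}$, $\{1,3,5,7\}$, $1^7$ (codewords given by supports) and $1$ on the other codewords, and let $\lambda_2:H\to\{0,1\}$ take the value $0$ exactly on $0^7$, $\{1,6,7\}$, $\{2,4,6\}$, $\{4,5,6,7\}$ and $1$ on the other codewords. Then the perfect codes $V22^1=V_H^{\lambda_1}$ and $V3^11=V_H^{\lambda_2}$ of length 15 are not transitive, where $V_H^\lambda=\{(x+y,\ |x|+\lambda(y),\ x)\mid x\in F^7,\ y\in H\}$.
   Context: $|x|=x_1+\dots+x_7\pmod 2$. The automorphism group of a code $C\subseteq F^m$ is $\mathrm{Aut}(C)=\{(y,\pi)\mid y\in F^m,\ \pi\in S_m,\ y+\pi(C)=C\}$, where permutations act by permuting coordinates. A code $C$ is transitive if $\mathrm{Aut}(C)$ has a subgroup acting transitively on the codewords of $C$; equivalently, for every $y\in C$ there is $\pi\in S_m$ with $y+\pi(C)=C$. *)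

theory Defs
  imports "HOL-Combinatorics.Permutations"
begin

text \<open>Binary words of length m are bool lists of length m (True = 1).
  Coordinate i (1-based in the paper) is list index i - 1.\<close>

definition vadd :: "bool list \<Rightarrow> bool list \<Rightarrow> bool list" where
  "vadd x y = map2 (\<lambda>a b. a \<noteq> b) x y"

definition wt :: "bool list \<Rightarrow> bool" where
  "wt x = odd (length (filter id x))"

text \<open>Permutation acting on coordinates: coordinate i is moved to position pi i.\<close>
definition perm_word :: "(nat \<Rightarrow> nat) \<Rightarrow> bool list \<Rightarrow> bool list" where
  "perm_word \<pi> x = map (\<lambda>j. x ! (inv \<pi> j)) [0..<length x]"

definition Aut :: "nat \<Rightarrow> bool list set \<Rightarrow> (bool list \<times> (nat \<Rightarrow> nat)) set" where
  "Aut m C = {(y, \<pi>). length y = m \<and> \<pi> permutes {0..<m} \<and>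
                (\<lambda>x. vadd y (perm_word \<pi> x)) ` C = C}"

text \<open>C is transitive if Aut(C) has a subgroup acting transitively on C
  (equivalently Aut(C) itself acts transitively on the codewords).\<close>
definition transitive_code :: "nat \<Rightarrow> bool list set \<Rightarrow> bool" where
  "transitive_code m C \<longleftrightarrow>
     (\<forall>c1\<in>C. \<forall>c2\<in>C. \<exists>(y, \<pi>)\<in>Aut m C. vadd y (perm_word \<pi> c1) = c2)"

definition word_of_support :: "nat \<Rightarrow> nat set \<Rightarrow> bool list" where
  "word_of_support m S = map (\<lambda>i. Suc i \<in> S) [0..<m]"

abbreviation w7 :: "nat set \<Rightarrow> bool list" where
  "w7 S \<equiv> word_of_support 7 S"

definition hamming7 :: "bool list set" where
  "hamming7 = {foldr vadd
                 [if a1 then w7 {1,2,3} else w7 {},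
                  if a2 then w7 {1,4,5} else w7 {},
                  if a3 then w7 {1,6,7} else w7 {},
                  if a4 then w7 {2,4,6} else w7 {}] (w7 {}) | a1 a2 a3 a4. True}"

definition lambda1 :: "bool list \<Rightarrow> bool" where
  "lambda1 y = (y \<notin> {w7 {}, w7 {1,6,7}, w7 {1,3,5,7}, w7 {1,2,3,4,5,6,7}})"

definition lambda2 :: "bool list \<Rightarrow> bool" where
  "lambda2 y = (y \<notin> {w7 {}, w7 {1,6,7}, w7 {2,4,6}, w7 {4,5,6,7}})"

definition V_code :: "nat \<Rightarrow> bool list set \<Rightarrow> (bool list \<Rightarrow> bool) \<Rightarrow> bool list set" where
  "V_code n H lam = {vadd x y @ [wt x \<noteq> lam y] @ x | x y. length x = n \<and> y \<in> H}"

end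

theory Submission
  imports Defs
begin

fun words :: "nat \<Rightarrow> nat \<Rightarrow> bool list list" where
  "words 0 k = (if k = 0 then [[]] else [])"
| "words (Suc n) k = map (Cons False) (words n k) @ (if k = 0 then [] else map (Cons True) (words n (k - 1)))"

definition Hlit :: "bool list list" where "Hlit = [[True,False,True,False,True,False,True],
 [True,True,True,True,True,True,True],
 [False,False,True,False,True,True,False],
 [False,True,True,True,True,False,False],
 [False,False,True,True,False,False,True],
 [False,True,True,False,False,True,True],
 [True,False,True,True,False,True,False],
 [True,True,True,False,False,False,False],
 [False,True,False,False,True,False,True],
 [False,False,False,True,True,True,True],
 [True,True,False,False,True,True,False],
 [True,False,False,True,True,False,False],
 [True,True,False,True,False,False,True],
 [True,False,False,False,False,True,True],
 [False,True,False,True,False,True,False],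
 [False,False,False,False,False,False,False]]"

definition Z1 :: "bool list list" where "Z1 = [[True,True,True,True,True,True,True], [True,False,False,False,False,True,True], [False,False,False,False,False,False,False], [True,False,True,False,True,False,True]]"
definition Z2 :: "bool list list" where "Z2 = [[False,True,False,True,False,True,False], [True,False,False,False,False,True,True], [False,False,False,False,False,False,False], [False,False,False,True,True,True,True]]"

definition memb :: "bool list list \<Rightarrow> bool list \<Rightarrow> bool" where
 "memb Z z = (length z = 15 \<and> vadd (take 7 z) (drop 8 z) \<in> set Hlit \<and>
     z!7 = (wt (drop 8 z) \<noteq> (vadd (take 7 z) (drop 8 z) \<notin> set Z)))"


definition e15 :: "bool list" where "e15 = [False,False,False,False,True,False,True,True,True,False,True,True,True,True,True]"

definition L1e :: "bool list list" where "L1e = [[False,False,False,False,False,False,False,False,False,False,True,True,False,False,True],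
  [False,False,False,False,False,False,False,False,False,True,False,False,True,False,True],
  [False,False,False,False,False,False,True,False,True,False,False,False,False,True,False],
  [False,False,False,False,False,False,True,True,False,False,False,False,False,False,True],
  [False,False,False,False,False,True,False,False,False,False,True,False,True,False,False],
  [False,False,False,False,False,True,False,False,False,True,False,True,False,False,False],
  [False,False,False,False,False,True,False,False,True,False,False,False,False,False,True],
  [False,False,False,False,False,True,False,True,False,False,False,False,False,True,False],
  [False,False,False,False,True,False,False,False,False,False,True,False,False,True,False],
  [False,False,False,False,True,False,False,False,True,False,False,True,False,False,False],
  [False,False,False,False,True,False,False,True,False,False,False,False,True,False,False],
  [False,False,False,False,True,False,True,False,False,True,False,False,False,False,False],
  [False,False,False,True,False,False,False,False,False,True,False,False,False,True,False],
  [False,False,False,True,False,False,False,False,True,False,False,False,True,False,False],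
  [False,False,False,True,False,False,False,True,False,False,False,True,False,False,False],
  [False,False,False,True,False,False,True,False,False,False,True,False,False,False,False],
  [False,False,True,False,False,False,False,False,False,False,False,False,True,True,False],
  [False,False,True,False,False,False,False,False,True,True,False,False,False,False,False],
  [False,False,True,False,False,False,False,True,False,False,True,False,False,False,False],
  [False,False,True,False,False,False,True,False,False,False,False,True,False,False,False],
  [False,False,True,False,True,True,False,False,False,False,False,False,False,False,False],
  [False,False,True,True,False,False,False,False,False,False,False,False,False,False,True],
  [False,True,False,False,False,False,False,False,False,False,False,True,False,True,False],
  [False,True,False,False,False,False,False,False,True,False,True,False,False,False,False],
  [False,True,False,False,False,False,False,True,False,True,False,False,False,False,False],
  [False,True,False,False,False,False,True,False,False,False,False,False,True,False,False],
  [False,True,False,False,True,False,False,False,False,False,False,False,False,False,True],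
  [False,True,False,True,False,True,False,False,False,False,False,False,False,False,False],
  [True,False,False,False,False,False,False,False,False,False,False,False,False,True,True],
  [True,False,False,False,False,False,False,False,False,False,False,True,True,False,False],
  [True,False,False,False,False,False,False,False,False,True,True,False,False,False,False],
  [True,False,False,False,False,False,False,True,True,False,False,False,False,False,False],
  [True,False,False,False,False,True,True,False,False,False,False,False,False,False,False],
  [True,False,False,True,True,False,False,False,False,False,False,False,False,False,False],
  [True,True,True,False,False,False,False,False,False,False,False,False,False,False,False]]"
definition L1z :: "bool list list" where "L1z = [[False,False,False,False,False,False,False,False,False,False,True,False,True,True,False],
  [False,False,False,False,False,False,False,False,False,False,True,True,False,False,True],
  [False,False,False,False,False,False,False,False,False,True,False,False,True,False,True],
  [False,False,False,False,False,False,False,False,False,True,False,True,False,True,False],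
  [False,False,False,False,False,False,False,False,True,False,False,True,True,False,False],
  [False,False,False,False,False,False,False,False,True,True,True,False,False,False,False],
  [False,False,False,False,False,False,True,False,True,False,False,False,False,True,False],
  [False,False,False,False,False,False,True,True,False,False,False,False,False,False,True],
  [False,False,False,False,False,True,False,False,True,False,False,False,False,False,True],
  [False,False,False,False,False,True,False,True,False,False,False,False,False,True,False],
  [False,False,False,False,True,False,False,True,False,False,False,False,True,False,False],
  [False,False,False,False,True,False,True,False,False,True,False,False,False,False,False],
  [False,False,False,False,True,True,False,False,False,False,True,False,False,False,False],
  [False,False,False,True,False,False,False,True,False,False,False,True,False,False,False],
  [False,False,False,True,False,False,True,False,False,False,True,False,False,False,False],
  [False,False,False,True,False,True,False,False,False,True,False,False,False,False,False],
  [False,False,False,True,True,False,False,False,True,False,False,False,False,False,False],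
  [False,False,True,False,False,False,False,True,False,False,True,False,False,False,False],
  [False,False,True,False,False,False,True,False,False,False,False,True,False,False,False],
  [False,False,True,False,False,True,False,False,False,False,False,False,True,False,False],
  [False,False,True,False,True,False,False,False,False,False,False,False,False,True,False],
  [False,False,True,True,False,False,False,False,False,False,False,False,False,False,True],
  [False,True,False,False,False,False,False,True,False,True,False,False,False,False,False],
  [False,True,False,False,False,False,True,False,False,False,False,False,True,False,False],
  [False,True,False,False,False,True,False,False,False,False,False,True,False,False,False],
  [False,True,False,False,True,False,False,False,False,False,False,False,False,False,True],
  [False,True,False,True,False,False,False,False,False,False,False,False,False,True,False],
  [False,True,True,False,False,False,False,False,True,False,False,False,False,False,False],
  [True,False,False,False,False,False,False,False,False,False,False,False,False,True,True],
  [True,False,False,False,False,False,False,True,True,False,False,False,False,False,False],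
  [True,False,False,False,False,True,True,False,False,False,False,False,False,False,False],
  [True,False,False,False,True,False,False,False,False,False,False,True,False,False,False],
  [True,False,False,True,False,False,False,False,False,False,False,False,True,False,False],
  [True,False,True,False,False,False,False,False,False,True,False,False,False,False,False],
  [True,True,False,False,False,False,False,False,False,False,True,False,False,False,False]]"
definition L2e :: "bool list list" where "L2e = [[False,False,False,False,False,False,False,False,False,False,True,True,False,False,True],
  [False,False,False,False,False,False,False,False,True,True,True,False,False,False,False],
  [False,False,False,False,False,False,True,False,False,True,False,False,True,False,False],
  [False,False,False,False,False,False,True,False,True,False,False,False,False,True,False],
  [False,False,False,False,False,False,True,True,False,False,False,False,False,False,True],
  [False,False,False,False,False,True,False,False,False,False,True,False,True,False,False],
  [False,False,False,False,False,True,False,False,False,True,False,True,False,False,False],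
  [False,False,False,False,False,True,False,False,True,False,False,False,False,False,True],
  [False,False,False,False,False,True,False,True,False,False,False,False,False,True,False],
  [False,False,False,False,True,False,False,False,False,False,True,False,False,True,False],
  [False,False,False,False,True,False,False,False,False,True,False,False,False,False,True],
  [False,False,False,False,True,False,False,False,True,False,False,True,False,False,False],
  [False,False,False,False,True,False,False,True,False,False,False,False,True,False,False],
  [False,False,False,True,False,False,False,False,False,True,False,False,False,True,False],
  [False,False,False,True,False,False,False,False,True,False,False,False,True,False,False],
  [False,False,False,True,False,False,False,True,False,False,False,True,False,False,False],
  [False,False,False,True,False,False,True,False,False,False,True,False,False,False,False],
  [False,False,True,False,False,False,False,False,False,False,False,False,True,True,False],
  [False,False,True,False,False,False,False,True,False,False,True,False,False,False,False],
  [False,False,True,False,False,False,True,False,False,False,False,True,False,False,False],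
  [False,False,True,False,True,True,False,False,False,False,False,False,False,False,False],
  [False,False,True,True,False,False,False,False,False,False,False,False,False,False,True],
  [False,True,False,False,False,False,False,False,False,False,False,False,True,False,True],
  [False,True,False,False,False,False,False,False,False,False,False,True,False,True,False],
  [False,True,False,False,False,False,False,True,False,True,False,False,False,False,False],
  [False,True,False,False,True,False,True,False,False,False,False,False,False,False,False],
  [False,True,False,True,False,True,False,False,False,False,False,False,False,False,False],
  [False,True,True,False,False,False,False,False,True,False,False,False,False,False,False],
  [True,False,False,False,False,False,False,False,False,False,False,False,False,True,True],
  [True,False,False,False,False,False,False,False,False,False,False,True,True,False,False],
  [True,False,False,False,False,False,False,True,True,False,False,False,False,False,False],
  [True,False,False,False,False,True,True,False,False,False,False,False,False,False,False],
  [True,False,False,True,True,False,False,False,False,False,False,False,False,False,False],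
  [True,False,True,False,False,False,False,False,False,True,False,False,False,False,False],
  [True,True,False,False,False,False,False,False,False,False,True,False,False,False,False]]"
definition L2z :: "bool list list" where "L2z = [[False,False,False,False,False,False,False,False,False,False,True,False,True,True,False],
  [False,False,False,False,False,False,False,False,False,False,True,True,False,False,True],
  [False,False,False,False,False,False,False,False,False,True,False,False,True,False,True],
  [False,False,False,False,False,False,False,False,True,False,False,True,True,False,False],
  [False,False,False,False,False,False,False,False,True,True,True,False,False,False,False],
  [False,False,False,False,False,False,True,False,True,False,False,False,False,True,False],
  [False,False,False,False,False,False,True,True,False,False,False,False,False,False,True],
  [False,False,False,False,False,True,False,False,False,True,False,True,False,False,False],
  [False,False,False,False,False,True,False,False,True,False,False,False,False,False,True],
  [False,False,False,False,False,True,False,True,False,False,False,False,False,True,False],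
  [False,False,False,False,True,False,False,True,False,False,False,False,True,False,False],
  [False,False,False,False,True,False,True,False,False,True,False,False,False,False,False],
  [False,False,False,False,True,True,False,False,False,False,True,False,False,False,False],
  [False,False,False,True,False,False,False,False,False,True,False,False,False,True,False],
  [False,False,False,True,False,False,False,True,False,False,False,True,False,False,False],
  [False,False,False,True,False,False,True,False,False,False,True,False,False,False,False],
  [False,False,False,True,True,False,False,False,True,False,False,False,False,False,False],
  [False,False,True,False,False,False,False,True,False,False,True,False,False,False,False],
  [False,False,True,False,False,False,True,False,False,False,False,True,False,False,False],
  [False,False,True,False,False,True,False,False,False,False,False,False,True,False,False],
  [False,False,True,False,True,False,False,False,False,False,False,False,False,True,False],
  [False,False,True,True,False,False,False,False,False,False,False,False,False,False,True],
  [False,True,False,False,False,False,False,False,False,False,False,True,False,True,False],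
  [False,True,False,False,False,False,False,True,False,True,False,False,False,False,False],
  [False,True,False,False,False,False,True,False,False,False,False,False,True,False,False],
  [False,True,False,False,True,False,False,False,False,False,False,False,False,False,True],
  [False,True,False,True,False,True,False,False,False,False,False,False,False,False,False],
  [False,True,True,False,False,False,False,False,True,False,False,False,False,False,False],
  [True,False,False,False,False,False,False,False,False,False,False,False,False,True,True],
  [True,False,False,False,False,False,False,True,True,False,False,False,False,False,False],
  [True,False,False,False,False,True,True,False,False,False,False,False,False,False,False],
  [True,False,False,False,True,False,False,False,False,False,False,True,False,False,False],
  [True,False,False,True,False,False,False,False,False,False,False,False,True,False,False],
  [True,False,True,False,False,False,False,False,False,True,False,False,False,False,False],
  [True,True,False,False,False,False,False,False,False,False,True,False,False,False,False]]"

definition cnt :: "bool list \<Rightarrow> nat" where "cnt u = length (filter id u)"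

definition S :: "bool list set \<Rightarrow> bool list \<Rightarrow> (bool list \<times> bool list) set" where
 "S C c = {(u,v). length u = 15 \<and> length v = 15 \<and> cnt u = 3 \<and> cnt v = 3 \<and>
     vadd c u \<in> C \<and> vadd c v \<in> C \<and> vadd c (vadd u v) \<in> C}"

lemma words_set: "set (words n k) = {u. length u = n \<and> cnt u = k}"
proof (induction n arbitrary: k)
  case 0
  then show ?case by (auto simp: cnt_def)
next
  case (Suc n)
  show ?case
  proof (rule set_eqI)
    fix u
    show "u \<in> set (words (Suc n) k) \<longleftrightarrow> u \<in> {u. length u = Suc n \<and> cnt u = k}"
      by (cases u) (auto simp: Suc cnt_def)
  qed
qed

lemma words_distinct: "distinct (words n k)"
  by (induction n arbitrary: k) (auto simp: distinct_map)

lemma vadd_length[simp]: "length (vadd x y) = min (length x) (length y)"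
  by (simp add: vadd_def)

lemma vadd_nth[simp]: "i < length x \<Longrightarrow> i < length y \<Longrightarrow> vadd x y ! i = (x ! i \<noteq> y ! i)"
  by (simp add: vadd_def)

lemma vadd_inv1: "length a = length b \<Longrightarrow> vadd (vadd a b) b = a"
  by (rule nth_equalityI) auto
lemma vadd_inv2: "length a = length b \<Longrightarrow> vadd b (vadd a b) = a"
  by (rule nth_equalityI) auto
lemma vadd_inv3: "length a = length b \<Longrightarrow> vadd (vadd b a) b = a"
  by (rule nth_equalityI) auto
lemma vadd_assoc: "length a = length b \<Longrightarrow> length b = length c \<Longrightarrow> vadd (vadd a b) c = vadd a (vadd b c)"
  by (rule nth_equalityI) auto

lemma hamming7_eq: "hamming7 = set Hlit"
  unfolding hamming7_def Hlit_def
  by (simp add: ex_bool_eq word_of_support_def vadd_def set_eq_iff upt_rec)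

lemma lambda1_eq: "lambda1 = (\<lambda>y. y \<notin> set Z1)"
  unfolding lambda1_def Z1_def by (auto simp: word_of_support_def upt_rec)
lemma lambda2_eq: "lambda2 = (\<lambda>y. y \<notin> set Z2)"
  unfolding lambda2_def Z2_def by (auto simp: word_of_support_def upt_rec)

lemma Hlit_len: "y \<in> set Hlit \<Longrightarrow> length y = 7"
  by (auto simp: Hlit_def)

lemma memb_iff: "z \<in> V_code 7 hamming7 (\<lambda>y. y \<notin> set Z) \<longleftrightarrow> memb Z z"
proof
  assume "z \<in> V_code 7 hamming7 (\<lambda>y. y \<notin> set Z)"
  then obtain x y where z: "z = vadd x y @ [wt x \<noteq> (y \<notin> set Z)] @ x" and x: "length x = 7" and y: "y \<in> set Hlit"
    by (auto simp: V_code_def hamming7_eq)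
  have ly: "length y = 7" using Hlit_len y by blast
  have t: "take 7 z = vadd x y" using z x ly by simp
  have d: "drop 8 z = x" using z x ly by simp
  have n: "z ! 7 = (wt x \<noteq> (y \<notin> set Z))" using z x ly by (simp add: nth_append)
  have vv: "vadd (vadd x y) x = y" using x ly by (simp add: vadd_inv3)
  show "memb Z z" unfolding memb_def using t d n vv y x ly z by simp
next
  assume m: "memb Z z"
  define x where "x = drop 8 z"
  define y where "y = vadd (take 7 z) (drop 8 z)"
  have l: "length z = 15" using m by (simp add: memb_def)
  have y: "y \<in> set Hlit" using m by (simp add: memb_def y_def)
  have b: "z ! 7 = (wt x \<noteq> (y \<notin> set Z))" using m by (simp add: memb_def x_def y_def)
  have lx: "length x = 7" using l by (simp add: x_def)
  have "vadd x y = take 7 z" unfolding x_def y_def using l by (simp add: vadd_inv2)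
  moreover have "z = take 7 z @ [z ! 7] @ drop 8 z"
    using id_take_nth_drop[of 7 z] l by simp
  ultimately have "z = vadd x y @ [wt x \<noteq> (y \<notin> set Z)] @ x" using b x_def by simp
  then show "z \<in> V_code 7 hamming7 (\<lambda>y. y \<notin> set Z)"
    unfolding V_code_def hamming7_eq using lx y by blast
qed

lemma len_filter_product:
  "length (filter (\<lambda>(u,v). Q u v) (List.product A B)) = sum_list (map (\<lambda>u. length (filter (Q u) B)) A)"
  by (induction A) (auto simp: filter_map o_def)

lemma card_S:
  assumes "length c = 15"
  shows "card (S (V_code 7 hamming7 (\<lambda>y. y \<notin> set Z)) c) =
    (let L = filter (\<lambda>u. memb Z (vadd c u)) (words 15 3) in
      sum_list (map (\<lambda>u. length (filter (\<lambda>v. memb Z (vadd c (vadd u v))) L)) L))"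
proof -
  define L where "L = filter (\<lambda>u. memb Z (vadd c u)) (words 15 3)"
  have "S (V_code 7 hamming7 (\<lambda>y. y \<notin> set Z)) c =
        set (filter (\<lambda>(u,v). memb Z (vadd c (vadd u v))) (List.product L L))"
    unfolding S_def L_def memb_iff using words_set[of 15 3] by auto
  moreover have "distinct (filter (\<lambda>(u,v). memb Z (vadd c (vadd u v))) (List.product L L))"
    unfolding L_def by (intro distinct_filter distinct_product words_distinct)
  ultimately have c: "card (S (V_code 7 hamming7 (\<lambda>y. y \<notin> set Z)) c) =
      length (filter (\<lambda>(u,v). memb Z (vadd c (vadd u v))) (List.product L L))"
    by (metis distinct_card)
  show ?thesis unfolding Let_def L_def[symmetric] c
    using len_filter_product[of "\<lambda>u v. memb Z (vadd c (vadd u v))" L L] by simp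
qed

lemma perm_len[simp]: "length (perm_word p x) = length x"
  by (simp add: perm_word_def)

lemma perm_nth: "j < length x \<Longrightarrow> perm_word p x ! j = x ! inv p j"
  by (simp add: perm_word_def)

lemma inv_lt: assumes a: "p permutes {0..<n}" "(j::nat) < n" shows "inv p j < n"
proof -
  from a have "j \<in> {0..<n}" by simp
  then show ?thesis using permutes_in_image[OF permutes_inv[OF a(1)], of j] by simp
qed

lemma p_lt: assumes a: "p permutes {0..<n}" "(j::nat) < n" shows "p j < n"
proof -
  from a have "j \<in> {0..<n}" by simp
  then show ?thesis using permutes_in_image[OF a(1), of j] by simp
qed

lemma perm_vadd:
  assumes "p permutes {0..<n}" "length a = n" "length b = n"
  shows "perm_word p (vadd a b) = vadd (perm_word p a) (perm_word p b)"
  by (rule nth_equalityI) (use assms inv_lt[OF assms(1)] in \<open>auto simp: perm_nth\<close>)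

lemma perm_inj:
  assumes "p permutes {0..<n}" "length a = n" "length b = n" "perm_word p a = perm_word p b"
  shows "a = b"
proof (rule nth_equalityI)
  show "length a = length b" using assms by simp
  fix i assume i: "i < length a"
  have pi: "p i < n" using p_lt[OF assms(1)] i assms(2) by simp
  have "perm_word p a ! (p i) = perm_word p b ! (p i)" using assms(4) by simp
  moreover have "perm_word p a ! (p i) = a ! i"
    using perm_nth[of "p i" a p] pi assms(2) permutes_inverses(2)[OF assms(1)] by simp
  moreover have "perm_word p b ! (p i) = b ! i"
    using perm_nth[of "p i" b p] pi assms(3) permutes_inverses(2)[OF assms(1)] by simp
  ultimately show "a ! i = b ! i" by simp
qed

lemma perm_cnt:
  assumes "p permutes {0..<n}" "length x = n"
  shows "cnt (perm_word p x) = cnt x"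
proof -
  have "{j. j < n \<and> x ! inv p j} = p ` {i. i < n \<and> x ! i}"
  proof
    show "{j. j < n \<and> x ! inv p j} \<subseteq> p ` {i. i < n \<and> x ! i}"
    proof
      fix j assume "j \<in> {j. j < n \<and> x ! inv p j}"
      then show "j \<in> p ` {i. i < n \<and> x ! i}"
        using inv_lt[OF assms(1)] permutes_inverses(1)[OF assms(1)]
        by (auto intro!: image_eqI[where x="inv p j"])
    qed
    show "p ` {i. i < n \<and> x ! i} \<subseteq> {j. j < n \<and> x ! inv p j}"
      using p_lt[OF assms(1)] permutes_inverses(2)[OF assms(1)] by auto
  qed
  moreover have "card (p ` {i. i < n \<and> x ! i}) = card {i. i < n \<and> x ! i}"
    using permutes_inj[OF assms(1)] by (simp add: card_image inj_on_def)
  moreover have "{j. j < n \<and> perm_word p x ! j} = {j. j < n \<and> x ! inv p j}"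
    using perm_nth[of _ x p] assms(2) by auto
  ultimately show ?thesis
    unfolding cnt_def using assms by (simp add: length_filter_conv_card)
qed

lemma key:
  assumes A: "(y, p) \<in> Aut 15 C" and c2: "vadd y (perm_word p c1) = c2" and l1: "length c1 = 15"
  shows "card (S C c1) \<le> card (S C c2)"
proof -
  have ly: "length y = 15" and pp: "p permutes {0..<15}" and img: "(\<lambda>x. vadd y (perm_word p x)) ` C = C"
    using A by (auto simp: Aut_def)
  have F: "x \<in> C \<Longrightarrow> vadd y (perm_word p x) \<in> C" for x using img by blast
  define g where "g = (\<lambda>(u::bool list, v::bool list). (perm_word p u, perm_word p v))"
  have eq: "vadd c2 (perm_word p u) = vadd y (perm_word p (vadd c1 u))" if "length u = 15" for u
    using that l1 ly pp by (simp add: c2[symmetric] perm_vadd vadd_assoc)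
  have inj: "inj_on g (S C c1)"
    unfolding inj_on_def g_def S_def using perm_inj[OF pp] by auto
  have sub: "g ` S C c1 \<subseteq> S C c2"
  proof
    fix w assume "w \<in> g ` S C c1"
    then obtain u v where uv: "(u,v) \<in> S C c1" and w: "w = (perm_word p u, perm_word p v)"
      by (auto simp: g_def)
    have lu: "length u = 15" and lv: "length v = 15" and cu: "cnt u = 3" and cv: "cnt v = 3"
      and m1: "vadd c1 u \<in> C" and m2: "vadd c1 v \<in> C" and m3: "vadd c1 (vadd u v) \<in> C"
      using uv by (auto simp: S_def)
    have "vadd (perm_word p u) (perm_word p v) = perm_word p (vadd u v)"
      using perm_vadd[OF pp lu lv] by simp
    then show "w \<in> S C c2"
      unfolding S_def w using lu lv cu cv perm_cnt[OF pp] eq[OF lu] eq[OF lv] F[OF m1] F[OF m2]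
        eq[of "vadd u v"] F[OF m3] by auto
  qed
  have "S C c2 \<subseteq> set (words 15 3) \<times> set (words 15 3)" by (auto simp: S_def words_set)
  then have fin: "finite (S C c2)" by (rule finite_subset) simp
  show ?thesis using card_inj_on_le[OF inj sub fin] .
qed

lemma not_trans:
  assumes "c1 \<in> C" "c2 \<in> C" "length c1 = 15" "card (S C c2) < card (S C c1)"
  shows "\<not> transitive_code 15 C"
proof
  assume "transitive_code 15 C"
  then obtain y p where "(y,p) \<in> Aut 15 C" "vadd y (perm_word p c1) = c2"
    using assms(1,2) unfolding transitive_code_def by blast
  then have "card (S C c1) \<le> card (S C c2)" using key assms(3) by blast
  then show False using assms(4) by simp
qed

lemma L1e_eq: "filter (\<lambda>u. memb Z1 (vadd e15 u)) (words 15 3) = L1e"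
  by code_simp
lemma L1z_eq: "filter (\<lambda>u. memb Z1 (vadd (replicate 15 False) u)) (words 15 3) = L1z"
  by code_simp
lemma L2e_eq: "filter (\<lambda>u. memb Z2 (vadd e15 u)) (words 15 3) = L2e"
  by code_simp
lemma L2z_eq: "filter (\<lambda>u. memb Z2 (vadd (replicate 15 False) u)) (words 15 3) = L2z"
  by code_simp

lemma c1e: "sum_list (map (\<lambda>u. length (filter (\<lambda>v. memb Z1 (vadd e15 (vadd u v))) L1e)) L1e) = 905"
  by code_simp
lemma c1z: "sum_list (map (\<lambda>u. length (filter (\<lambda>v. memb Z1 (vadd (replicate 15 False) (vadd u v))) L1z)) L1z) = 777"
  by code_simp
lemma c2e: "sum_list (map (\<lambda>u. length (filter (\<lambda>v. memb Z2 (vadd e15 (vadd u v))) L2e)) L2e) = 969"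
  by code_simp
lemma c2z: "sum_list (map (\<lambda>u. length (filter (\<lambda>v. memb Z2 (vadd (replicate 15 False) (vadd u v))) L2z)) L2z) = 841"
  by code_simp

lemma m1e: "memb Z1 e15" by code_simp
lemma m1z: "memb Z1 (replicate 15 False)" by code_simp
lemma m2e: "memb Z2 e15" by code_simp
lemma m2z: "memb Z2 (replicate 15 False)" by code_simp

lemma le15: "length e15 = 15" by (simp add: e15_def)

theorem lemma4:
  shows "\<not> transitive_code 15 (V_code 7 hamming7 lambda1) \<and>
         \<not> transitive_code 15 (V_code 7 hamming7 lambda2)"
proof
  show "\<not> transitive_code 15 (V_code 7 hamming7 lambda1)"
    unfolding lambda1_eq
    by (rule not_trans[of e15 _ "replicate 15 False"])
       (simp_all add: memb_iff m1e m1z le15 card_S Let_def L1e_eq L1z_eq c1e c1z)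
  show "\<not> transitive_code 15 (V_code 7 hamming7 lambda2)"
    unfolding lambda2_eq
    by (rule not_trans[of e15 _ "replicate 15 False"])
       (simp_all add: memb_iff m2e m2z le15 card_S Let_def L2e_eq L2z_eq c2e c2z)
qed

end
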